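(* Let $\sigma>0$, $\eta>0$, $\hat\alpha>0$, $h>0$, $r\ge0$, $a\in\mathbb{R}$, and for $\beta\ge0$ let $v_\beta$ denote the unique $C^1[0,\infty)$ solution of $\frac{\sigma^2}2v'(y)=\beta+\frac{\hat\alpha}4v(y)^2+\eta y(v(y)-\frac h\eta)-av(y)$, $y\ge0$, $v(0)=-r$. Let $\underline\beta_2=-ar-\frac{\hat\alpha r^2}4$. If $a>-\frac{\hat\alpha}4r$ then $\beta_1^*:=\inf\mathcal I_1>0$; if $a\le-\frac{\hat\alpha}4r$ then $\beta_2^*:=\inf\mathcal I_2>0$.
   Context: $\mathcal I_1=\{\beta\ge0: v_\beta$ is nondecreasing on $(0,\infty)\}$ and $\mathcal I_2=\{\beta>\underline\beta_2: v_\beta$ is nondecreasing on $(0,\infty)\}$. *)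

theory Defs
  imports "HOL-Analysis.Analysis"
begin

text \<open>v is a C^1[0,oo) solution of
  (sigma^2/2) v'(y) = beta + (alpha/4) v(y)^2 + eta*y*(v(y) - h/eta) - a*v(y),  v(0) = -r.
  The derivative is taken within [0,oo) (one-sided at 0); its continuity is automatic
  since it equals a continuous expression in y and v(y).\<close>
definition ode_sol :: "real \<Rightarrow> real \<Rightarrow> real \<Rightarrow> real \<Rightarrow> real \<Rightarrow> real \<Rightarrow> real \<Rightarrow> (real \<Rightarrow> real) \<Rightarrow> bool" where
  "ode_sol \<sigma> \<eta> \<alpha> h r a \<beta> v \<longleftrightarrow>
     v 0 = - r \<and>
     (\<forall>y\<ge>0. (v has_real_derivative
        (2 / \<sigma>\<^sup>2) * (\<beta> + \<alpha> / 4 * (v y)\<^sup>2 + \<eta> * y * (v y - h / \<eta>) - a * v y))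
        (at y within {0..})) \<and>
     continuous_on {0..} (\<lambda>y. (2 / \<sigma>\<^sup>2) * (\<beta> + \<alpha> / 4 * (v y)\<^sup>2 + \<eta> * y * (v y - h / \<eta>) - a * v y))"

text \<open>"v_beta is nondecreasing on (0,oo)": the (unique) solution v_beta exists and is nondecreasing.\<close>
definition I1 :: "real \<Rightarrow> real \<Rightarrow> real \<Rightarrow> real \<Rightarrow> real \<Rightarrow> real \<Rightarrow> real set" where
  "I1 \<sigma> \<eta> \<alpha> h r a = {\<beta>. \<beta> \<ge> 0 \<and>
      (\<exists>v. ode_sol \<sigma> \<eta> \<alpha> h r a \<beta> v \<and> mono_on {0<..} v)}"

definition beta2_low :: "real \<Rightarrow> real \<Rightarrow> real \<Rightarrow> real" where
  "beta2_low \<alpha> r a = - a * r - \<alpha> * r\<^sup>2 / 4"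

definition I2 :: "real \<Rightarrow> real \<Rightarrow> real \<Rightarrow> real \<Rightarrow> real \<Rightarrow> real \<Rightarrow> real set" where
  "I2 \<sigma> \<eta> \<alpha> h r a = {\<beta>. \<beta> > beta2_low \<alpha> r a \<and> \<beta> \<ge> 0 \<and>
      (\<exists>v. ode_sol \<sigma> \<eta> \<alpha> h r a \<beta> v \<and> mono_on {0<..} v)}"

end

theory Submission
  imports Defs
begin

definition Fv :: "real \<Rightarrow> real \<Rightarrow> real \<Rightarrow> real \<Rightarrow> real \<Rightarrow> real \<Rightarrow> real \<Rightarrow> real \<Rightarrow> real" where
  "Fv \<sigma> \<eta> \<alpha> h a \<beta> y w = (2 / \<sigma>\<^sup>2) * (\<beta> + \<alpha> / 4 * w\<^sup>2 + \<eta> * y * (w - h / \<eta>) - a * w)"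

lemma sol_basic:
  assumes "ode_sol \<sigma> \<eta> \<alpha> h r a \<beta> v"
  shows "v 0 = - r"
    and "\<And>y. y > 0 \<Longrightarrow> (v has_real_derivative Fv \<sigma> \<eta> \<alpha> h a \<beta> y (v y)) (at y)"
    and "continuous_on {0..} v"
proof -
  have d: "\<And>y. y \<ge> 0 \<Longrightarrow> (v has_real_derivative Fv \<sigma> \<eta> \<alpha> h a \<beta> y (v y)) (at y within {0..})"
    using assms unfolding ode_sol_def Fv_def by auto
  show "v 0 = - r" using assms unfolding ode_sol_def by auto
  show "\<And>y. y > 0 \<Longrightarrow> (v has_real_derivative Fv \<sigma> \<eta> \<alpha> h a \<beta> y (v y)) (at y)"
  proof -
    fix y :: real assume "y > 0"
    then have "at y within {0..} = at y" by (intro at_within_interior) auto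
    then show "(v has_real_derivative Fv \<sigma> \<eta> \<alpha> h a \<beta> y (v y)) (at y)"
      using d[of y] \<open>y > 0\<close> by simp
  qed
  show "continuous_on {0..} v"
    unfolding continuous_on_eq_continuous_within
    using d DERIV_continuous by (metis atLeast_iff)
qed

lemma sol_mvt:
  assumes "ode_sol \<sigma> \<eta> \<alpha> h r a \<beta> v" "0 \<le> x" "x < y"
  shows "\<exists>z. x < z \<and> z < y \<and> v y - v x = (y - x) * Fv \<sigma> \<eta> \<alpha> h a \<beta> z (v z)"
proof -
  note b = sol_basic[OF assms(1)]
  have c: "continuous_on {x..y} v"
    using b(3) by (rule continuous_on_subset) (use assms in auto)
  have "\<And>z. x < z \<Longrightarrow> z < y \<Longrightarrow> v differentiable (at z)"
    using b(2) assms real_differentiable_def by (metis le_less_trans)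
  from MVT[OF assms(3) c this] obtain l z where
    z: "x < z" "z < y" "DERIV v z :> l" "v y - v x = (y - x) * l" by blast
  have "l = Fv \<sigma> \<eta> \<alpha> h a \<beta> z (v z)"
    using DERIV_unique[OF z(3) b(2)] z assms by simp
  then show ?thesis using z by blast
qed

lemma sol_mono_nonneg:
  assumes "ode_sol \<sigma> \<eta> \<alpha> h r a \<beta> v" "mono_on {0<..} v" "y > 0"
  shows "Fv \<sigma> \<eta> \<alpha> h a \<beta> y (v y) \<ge> 0"
proof (rule ccontr)
  assume "\<not> ?thesis"
  then have neg: "Fv \<sigma> \<eta> \<alpha> h a \<beta> y (v y) < 0" by simp
  from DERIV_neg_dec_right[OF sol_basic(2)[OF assms(1) assms(3)] neg]
  obtain d where d: "d > 0" "\<And>e. e > 0 \<Longrightarrow> e < d \<Longrightarrow> v y > v (y + e)" by blast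
  have "v y > v (y + d/2)" using d by simp
  moreover have "v y \<le> v (y + d/2)"
    using assms(2,3) d(1) by (intro mono_onD[OF assms(2)]) auto
  ultimately show False by simp
qed

lemma Fv_eq:
  assumes "\<eta> > 0"
  shows "Fv \<sigma> \<eta> \<alpha> h a \<beta> y w = (2 / \<sigma>\<^sup>2) * ((\<beta> + \<alpha> / 4 * w\<^sup>2 - a * w) - y * (h - \<eta> * w))"
proof -
  have "\<eta> * y * (w - h / \<eta>) = - (y * (h - \<eta> * w))" using assms by (simp add: field_simps)
  then show ?thesis unfolding Fv_def by (simp add: algebra_simps)
qed

lemma barrier:
  assumes pos: "\<sigma> > 0" "\<eta> > 0" "\<alpha> > 0" "h > 0"
    and sol: "ode_sol \<sigma> \<eta> \<alpha> h r a \<beta> v" and mon: "mono_on {0<..} v"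
    and vs: "vs > - r" "\<eta> * vs < h" and T: "T > 0"
    and A: "\<And>\<xi> w. 0 < \<xi> \<Longrightarrow> \<xi> \<le> T \<Longrightarrow> - r \<le> w \<Longrightarrow> w \<le> vs \<Longrightarrow>
              Fv \<sigma> \<eta> \<alpha> h a \<beta> \<xi> w * T < vs + r"
    and B: "\<beta> + \<alpha> / 4 * vs\<^sup>2 - a * vs < T * (h - \<eta> * vs)"
  shows False
proof -
  note b = sol_basic[OF sol]
  define c where "c = 2 / \<sigma>\<^sup>2"
  have c: "c > 0" using pos unfolding c_def by simp
  have Feq: "\<And>y w. Fv \<sigma> \<eta> \<alpha> h a \<beta> y w = c * ((\<beta> + \<alpha> / 4 * w\<^sup>2 - a * w) - y * (h - \<eta> * w))"
    using Fv_eq[OF pos(2)] c_def by simp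
  have nn: "\<And>y. y > 0 \<Longrightarrow> Fv \<sigma> \<eta> \<alpha> h a \<beta> y (v y) \<ge> 0"
    using sol_mono_nonneg[OF sol mon] by simp
  have ger: "\<And>y. y > 0 \<Longrightarrow> v y \<ge> - r"
  proof -
    fix y :: real assume "y > 0"
    from sol_mvt[OF sol _ this] obtain z where "0 < z" "z < y"
      "v y - v 0 = (y - 0) * Fv \<sigma> \<eta> \<alpha> h a \<beta> z (v z)" by auto
    moreover have "Fv \<sigma> \<eta> \<alpha> h a \<beta> z (v z) \<ge> 0" using nn \<open>0 < z\<close> by simp
    ultimately have "v y - v 0 \<ge> 0" using \<open>y > 0\<close> by simp
    then show "v y \<ge> - r" using b(1) by simp
  qed
  have lev: "v y \<le> vs" if "y \<ge> 0" for y
  proof (rule ccontr)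
    assume "\<not> v y \<le> vs"
    then have "v y > vs" by simp
    have "continuous_on {0..y} v" using b(3) by (rule continuous_on_subset) auto
    from IVT'[of v 0 vs y, OF _ _ that this] \<open>v y > vs\<close> b(1) vs(1)
    obtain x where x: "0 \<le> x" "x \<le> y" "v x = vs" by auto
    have "x \<noteq> 0" using x b(1) vs(1) by auto
    then have xp: "x > 0" using x by simp
    show False
    proof (cases "x \<le> T")
      case True
      from sol_mvt[OF sol _ xp] obtain z where z: "0 < z" "z < x"
        "v x - v 0 = (x - 0) * Fv \<sigma> \<eta> \<alpha> h a \<beta> z (v z)" by auto
      have vz: "v z \<le> vs" using mono_onD[OF mon, of z x] z(1,2) x(3) by simp
      have zT: "z \<le> T" using z(2) True by linarith
      have gz: "- r \<le> v z" using ger z(1) .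
      have FT: "Fv \<sigma> \<eta> \<alpha> h a \<beta> z (v z) * T < vs + r" by (rule A[OF z(1) zT gz vz])
      have F0: "Fv \<sigma> \<eta> \<alpha> h a \<beta> z (v z) \<ge> 0" using nn z(1) by simp
      have "x * Fv \<sigma> \<eta> \<alpha> h a \<beta> z (v z) \<le> T * Fv \<sigma> \<eta> \<alpha> h a \<beta> z (v z)"
        using True F0 by (rule mult_right_mono)
      moreover have "T * Fv \<sigma> \<eta> \<alpha> h a \<beta> z (v z) = Fv \<sigma> \<eta> \<alpha> h a \<beta> z (v z) * T"
        by (rule mult.commute)
      moreover have "x * Fv \<sigma> \<eta> \<alpha> h a \<beta> z (v z) = vs + r" using z(3) x(3) b(1) by simp
      ultimately show False using FT by linarith
    next
      case False
      have "(\<beta> + \<alpha> / 4 * vs\<^sup>2 - a * vs) - x * (h - \<eta> * vs) < 0"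
      proof -
        have "T * (h - \<eta> * vs) \<le> x * (h - \<eta> * vs)"
          using False vs(2) by (intro mult_right_mono) auto
        then show ?thesis using B by simp
      qed
      then have "c * ((\<beta> + \<alpha> / 4 * vs\<^sup>2 - a * vs) - x * (h - \<eta> * vs)) < 0"
        by (rule mult_pos_neg[OF c])
      then have "Fv \<sigma> \<eta> \<alpha> h a \<beta> x (v x) < 0" unfolding Feq x(3) .
      moreover have "Fv \<sigma> \<eta> \<alpha> h a \<beta> x (v x) \<ge> 0" using nn xp .
      ultimately show False by linarith
    qed
  qed
  define B0 where "B0 = \<bar>v 1\<bar> + \<bar>vs\<bar>"
  define M where "M = \<bar>\<beta>\<bar> + \<alpha> / 4 * B0\<^sup>2 + \<bar>a\<bar> * B0"
  define y where "y = 1 + \<bar>M\<bar> / (h - \<eta> * vs)"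
  have hv: "h - \<eta> * vs > 0" using vs by simp
  have y1: "y \<ge> 1" using hv unfolding y_def by simp
  have yM: "y * (h - \<eta> * vs) > M"
  proof -
    have "y * (h - \<eta> * vs) = (h - \<eta> * vs) + \<bar>M\<bar>" using hv unfolding y_def by (simp add: field_simps)
    then show ?thesis using hv by simp
  qed
  have v1: "v 1 \<le> v y" using y1 by (intro mono_onD[OF mon]) auto
  have vy: "v y \<le> vs" using lev y1 by simp
  have absv: "\<bar>v y\<bar> \<le> B0" unfolding B0_def using v1 vy by linarith
  have "(v y)\<^sup>2 \<le> B0\<^sup>2" proof -
    have "\<bar>v y\<bar> \<le> \<bar>B0\<bar>" using absv by simp
    then show ?thesis by (simp only: abs_le_square_iff)
  qed
  then have q: "\<alpha> / 4 * (v y)\<^sup>2 \<le> \<alpha> / 4 * B0\<^sup>2" using pos by simp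
  have "- a * v y \<le> \<bar>a\<bar> * B0"
  proof -
    have "- a * v y \<le> \<bar>a\<bar> * \<bar>v y\<bar>" by (simp add: abs_mult[symmetric])
    also have "\<dots> \<le> \<bar>a\<bar> * B0" using absv by (intro mult_left_mono) auto
    finally show ?thesis .
  qed
  then have g: "\<beta> + \<alpha> / 4 * (v y)\<^sup>2 - a * v y \<le> M" unfolding M_def using q by linarith
  have "y * (h - \<eta> * vs) \<le> y * (h - \<eta> * v y)"
  proof -
    have "\<eta> * v y \<le> \<eta> * vs" using vy pos by (intro mult_left_mono) auto
    then show ?thesis using y1 by (intro mult_left_mono) auto
  qed
  then have "(\<beta> + \<alpha> / 4 * (v y)\<^sup>2 - a * v y) - y * (h - \<eta> * v y) < 0" using g yM by linarith
  then have "c * ((\<beta> + \<alpha> / 4 * (v y)\<^sup>2 - a * v y) - y * (h - \<eta> * v y)) < 0"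
    by (rule mult_pos_neg[OF c])
  then have "Fv \<sigma> \<eta> \<alpha> h a \<beta> y (v y) < 0" unfolding Feq .
  moreover have "Fv \<sigma> \<eta> \<alpha> h a \<beta> y (v y) \<ge> 0" using nn y1 by simp
  ultimately show False by linarith
qed

lemma inf_pos:
  fixes S :: "real set"
  assumes "b0 > 0" "\<And>\<beta>. \<beta> \<in> S \<Longrightarrow> b0 \<le> \<beta>"
  shows "Inf (ereal ` S) > 0"
proof -
  have "ereal b0 \<le> Inf (ereal ` S)" by (rule Inf_greatest) (use assms(2) in auto)
  moreover have "0 < ereal b0" using assms(1) by simp
  ultimately show ?thesis by (meson less_le_trans)
qed

lemma caseI:
  assumes pos: "\<sigma> > 0" "\<eta> > 0" "\<alpha> > 0" "h > 0" and r: "r > 0"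
  shows "\<exists>b0>0. \<forall>\<beta> v. 0 \<le> \<beta> \<longrightarrow> ode_sol \<sigma> \<eta> \<alpha> h r a \<beta> v \<longrightarrow> mono_on {0<..} v \<longrightarrow> b0 \<le> \<beta>"
proof -
  define c where "c = 2 / \<sigma>\<^sup>2"
  have c: "c > 0" using pos unfolding c_def by simp
  have Feq: "\<And>y w. Fv \<sigma> \<eta> \<alpha> h a \<beta> y w = c * ((\<beta> + \<alpha> / 4 * w\<^sup>2 - a * w) - y * (h - \<eta> * w))" for \<beta>
    using Fv_eq[OF pos(2)] c_def by simp
  define Q where "Q = \<alpha> / 4 * r\<^sup>2 + \<bar>a\<bar> * r"
  have Q: "Q \<ge> 0" unfolding Q_def using pos r by simp
  define b0 where "b0 = min 1 (h * r / (4 * c * (Q + 2)))"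
  have b0: "b0 > 0" unfolding b0_def using pos r c Q by simp
  show ?thesis
  proof (intro exI[of _ b0] conjI allI impI b0)
    fix \<beta> v assume \<beta>: "0 \<le> \<beta>" and sol: "ode_sol \<sigma> \<eta> \<alpha> h r a \<beta> v" and mon: "mono_on {0<..} v"
    show "b0 \<le> \<beta>"
    proof (rule ccontr)
      assume "\<not> b0 \<le> \<beta>"
      then have lt: "\<beta> < b0" by simp
      then have lt1: "\<beta> < 1" and lt2: "\<beta> < h * r / (4 * c * (Q + 2))" unfolding b0_def by auto
      define T where "T = r / (2 * c * (\<beta> + Q + 1))"
      have den: "2 * c * (\<beta> + Q + 1) > 0" using c Q \<beta> by simp
      have T: "T > 0" unfolding T_def using den r by simp
      have cT: "c * (\<beta> + Q) * T < r"
      proof -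
        have "2 * c * (\<beta> + Q + 1) - c * (\<beta> + Q) = c * (\<beta> + Q + 2)" by (simp add: algebra_simps)
        moreover have "c * (\<beta> + Q + 2) > 0" using c Q \<beta> by simp
        ultimately have "c * (\<beta> + Q) < 2 * c * (\<beta> + Q + 1)" by linarith
        then have "c * (\<beta> + Q) * T < 2 * c * (\<beta> + Q + 1) * T" using T by (rule mult_strict_right_mono)
        also have "\<dots> = r"
        proof -
          have "c \<noteq> 0" "\<beta> + Q + 1 \<noteq> 0" using c Q \<beta> by auto
          then show ?thesis unfolding T_def by simp
        qed
        finally show ?thesis .
      qed
      show False
      proof (rule barrier[OF pos sol mon, of 0 T])
        show "0 > - r" using r by simp
        show "\<eta> * 0 < h" using pos by simp
        show "T > 0" by (rule T)
        fix \<xi> w assume \<xi>: "0 < \<xi>" "\<xi> \<le> T" and w: "- r \<le> w" "w \<le> 0"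
        have w2: "w\<^sup>2 \<le> r\<^sup>2"
        proof -
          have "\<bar>w\<bar> \<le> \<bar>r\<bar>" using w r by simp
          then show ?thesis by (simp only: abs_le_square_iff)
        qed
        have aw: "- a * w \<le> \<bar>a\<bar> * r"
        proof -
          have "- a * w \<le> \<bar>a\<bar> * \<bar>w\<bar>" by (simp add: abs_mult[symmetric])
          also have "\<dots> \<le> \<bar>a\<bar> * r" using w by (intro mult_left_mono) auto
          finally show ?thesis .
        qed
        have xi: "\<xi> * (h - \<eta> * w) \<ge> 0"
        proof -
          have "\<eta> * w \<le> 0" using w pos by (simp add: mult_nonneg_nonpos)
          then show ?thesis using \<xi> pos by simp
        qed
        have "\<alpha> / 4 * w\<^sup>2 \<le> \<alpha> / 4 * r\<^sup>2" using w2 pos by simp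
        then have inner: "(\<beta> + \<alpha> / 4 * w\<^sup>2 - a * w) - \<xi> * (h - \<eta> * w) \<le> \<beta> + Q"
          unfolding Q_def using aw xi by linarith
        have "Fv \<sigma> \<eta> \<alpha> h a \<beta> \<xi> w \<le> c * (\<beta> + Q)"
          unfolding Feq using inner c by (intro mult_left_mono) auto
        then have "Fv \<sigma> \<eta> \<alpha> h a \<beta> \<xi> w * T \<le> c * (\<beta> + Q) * T"
          using T by (intro mult_right_mono) auto
        then show "Fv \<sigma> \<eta> \<alpha> h a \<beta> \<xi> w * T < 0 + r" using cT by linarith
      next
        have "\<beta> * (2 * c * (\<beta> + Q + 1)) \<le> \<beta> * (2 * c * (Q + 2))"
          using \<beta> lt1 c by (intro mult_left_mono) auto
        also have "\<dots> < h * r / (4 * c * (Q + 2)) * (2 * c * (Q + 2))"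
          using lt2 c Q by (intro mult_strict_right_mono) auto
        also have "\<dots> = h * r / 2"
        proof -
          have D: "c * (Q + 2) \<noteq> 0" using c Q by auto
          have aux: "\<And>x D. (D::real) \<noteq> 0 \<Longrightarrow> x / (4 * D) * (2 * D) = x / 2" by (simp add: field_simps)
          have "h * r / (4 * c * (Q + 2)) * (2 * c * (Q + 2)) = h * r / (4 * (c * (Q + 2))) * (2 * (c * (Q + 2)))"
            by (simp only: mult.assoc)
          also have "\<dots> = h * r / 2" by (rule aux[OF D])
          finally show ?thesis .
        qed
        also have "\<dots> < r * h" using pos r by simp
        finally have "\<beta> * (2 * c * (\<beta> + Q + 1)) < r * h" .
        then have "\<beta> < r * h / (2 * c * (\<beta> + Q + 1))" using den by (simp add: pos_less_divide_eq)
        also have "\<dots> = T * h" unfolding T_def by simp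
        finally show "\<beta> + \<alpha> / 4 * 0\<^sup>2 - a * 0 < T * (h - \<eta> * 0)" by simp
      qed
    qed
  qed
qed

lemma caseII:
  assumes pos: "\<sigma> > 0" "\<eta> > 0" "\<alpha> > 0" "h > 0" and r: "r = 0" and a: "a > 0"
  shows "\<exists>b0>0. \<forall>\<beta> v. 0 \<le> \<beta> \<longrightarrow> ode_sol \<sigma> \<eta> \<alpha> h r a \<beta> v \<longrightarrow> mono_on {0<..} v \<longrightarrow> b0 \<le> \<beta>"
proof -
  define c where "c = 2 / \<sigma>\<^sup>2"
  have c: "c > 0" using pos unfolding c_def by simp
  have Feq: "\<And>y w. Fv \<sigma> \<eta> \<alpha> h a \<beta> y w = c * ((\<beta> + \<alpha> / 4 * w\<^sup>2 - a * w) - y * (h - \<eta> * w))" for \<beta>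
    using Fv_eq[OF pos(2)] c_def by simp
  define s where "s = min (2 * a / \<alpha>) (h / (2 * \<eta>))"
  have s0: "s > 0" unfolding s_def using pos a by simp
  have s1: "\<alpha> / 4 * s \<le> a / 2"
  proof -
    have "s \<le> 2 * a / \<alpha>" unfolding s_def by simp
    then have "\<alpha> / 4 * s \<le> \<alpha> / 4 * (2 * a / \<alpha>)" using pos by (intro mult_left_mono) auto
    also have "\<dots> = a / 2" using pos by simp
    finally show ?thesis .
  qed
  have s2: "\<eta> * s \<le> h / 2"
  proof -
    have "s \<le> h / (2 * \<eta>)" unfolding s_def by simp
    then have "\<eta> * s \<le> \<eta> * (h / (2 * \<eta>))" using pos by (intro mult_left_mono) auto
    also have "\<dots> = h / 2" using pos by simp
    finally show ?thesis .
  qed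
  define b0 where "b0 = a * s / 2"
  have b0: "b0 > 0" unfolding b0_def using a s0 by simp
  show ?thesis
  proof (intro exI[of _ b0] conjI allI impI b0)
    fix \<beta> v assume \<beta>: "0 \<le> \<beta>" and sol: "ode_sol \<sigma> \<eta> \<alpha> h r a \<beta> v" and mon: "mono_on {0<..} v"
    show "b0 \<le> \<beta>"
    proof (rule ccontr)
      assume "\<not> b0 \<le> \<beta>"
      then have lt: "\<beta> < a * s / 2" unfolding b0_def by simp
      define T where "T = s / (c * (\<beta> + 1))"
      have den: "c * (\<beta> + 1) > 0" using c \<beta> by simp
      have T: "T > 0" unfolding T_def using den s0 by simp
      have cT: "c * \<beta> * T < s"
      proof -
        have "c * \<beta> < c * (\<beta> + 1)" using c by simp
        then have "c * \<beta> * T < c * (\<beta> + 1) * T" using T by (rule mult_strict_right_mono)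
        also have "\<dots> = s"
        proof -
          have "c \<noteq> 0" "\<beta> + 1 \<noteq> 0" using c \<beta> by auto
          then show ?thesis unfolding T_def by simp
        qed
        finally show ?thesis .
      qed
      have q: "\<And>w. 0 \<le> w \<Longrightarrow> w \<le> s \<Longrightarrow> \<alpha> / 4 * w\<^sup>2 - a * w \<le> w * (- a / 2)"
      proof -
        fix w :: real assume w: "0 \<le> w" "w \<le> s"
        have "\<alpha> / 4 * w \<le> \<alpha> / 4 * s" using w pos by (intro mult_left_mono) auto
        then have "\<alpha> / 4 * w - a \<le> - a / 2" using s1 by linarith
        then have "w * (\<alpha> / 4 * w - a) \<le> w * (- a / 2)" using w by (intro mult_left_mono) auto
        moreover have "w * (\<alpha> / 4 * w - a) = \<alpha> / 4 * w\<^sup>2 - a * w" by (simp add: algebra_simps power2_eq_square)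
        ultimately show "\<alpha> / 4 * w\<^sup>2 - a * w \<le> w * (- a / 2)" by simp
      qed
      show False
      proof (rule barrier[OF pos sol mon, of s T])
        show "s > - r" using r s0 by simp
        show "\<eta> * s < h" using s2 pos by simp
        show "T > 0" by (rule T)
        fix \<xi> w assume \<xi>: "0 < \<xi>" "\<xi> \<le> T" and w: "- r \<le> w" "w \<le> s"
        have w0: "0 \<le> w" using w r by simp
        have "w * (- a / 2) \<le> 0" using w0 a by (simp add: mult_nonneg_nonpos)
        then have qw: "\<alpha> / 4 * w\<^sup>2 - a * w \<le> 0" using q[OF w0 w(2)] by linarith
        have xi: "\<xi> * (h - \<eta> * w) \<ge> 0"
        proof -
          have "\<eta> * w \<le> \<eta> * s" using w pos by (intro mult_left_mono) auto
          then have "h - \<eta> * w \<ge> 0" using s2 pos by linarith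
          then show ?thesis using \<xi> by simp
        qed
        have inner: "(\<beta> + \<alpha> / 4 * w\<^sup>2 - a * w) - \<xi> * (h - \<eta> * w) \<le> \<beta>"
          using qw xi by linarith
        have "Fv \<sigma> \<eta> \<alpha> h a \<beta> \<xi> w \<le> c * \<beta>"
          unfolding Feq using inner c by (intro mult_left_mono) auto
        then have "Fv \<sigma> \<eta> \<alpha> h a \<beta> \<xi> w * T \<le> c * \<beta> * T"
          using T by (intro mult_right_mono) auto
        then show "Fv \<sigma> \<eta> \<alpha> h a \<beta> \<xi> w * T < s + r" using cT r by linarith
      next
        have "\<alpha> / 4 * s\<^sup>2 - a * s \<le> s * (- a / 2)" using q[of s] s0 by simp
        then have "\<beta> + \<alpha> / 4 * s\<^sup>2 - a * s < 0" using lt by (simp add: algebra_simps)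
        moreover have "T * (h - \<eta> * s) > 0" using T s2 pos by simp
        ultimately show "\<beta> + \<alpha> / 4 * s\<^sup>2 - a * s < T * (h - \<eta> * s)" by linarith
      qed
    qed
  qed
qed

lemma caseIII:
  assumes pos: "\<sigma> > 0" "\<eta> > 0" "\<alpha> > 0" "h > 0" and r: "r = 0" and a: "a \<le> 0"
  shows "\<exists>b0>0. \<forall>\<beta> v. 0 < \<beta> \<longrightarrow> ode_sol \<sigma> \<eta> \<alpha> h r a \<beta> v \<longrightarrow> mono_on {0<..} v \<longrightarrow> b0 \<le> \<beta>"
proof -
  define c where "c = 2 / \<sigma>\<^sup>2"
  have c: "c > 0" using pos unfolding c_def by simp
  have Feq: "\<And>y w. Fv \<sigma> \<eta> \<alpha> h a \<beta> y w = c * ((\<beta> + \<alpha> / 4 * w\<^sup>2 - a * w) - y * (h - \<eta> * w))" for \<beta>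
    using Fv_eq[OF pos(2)] c_def by simp
  define K where "K = \<alpha> / 4 - a"
  have K: "K > 0" unfolding K_def using pos a by simp
  define \<delta> where "\<delta> = 1 / (K + 1)"
  have \<delta>0: "\<delta> > 0" unfolding \<delta>_def using K by simp
  have \<delta>1: "\<delta> \<le> 1" unfolding \<delta>_def using K by simp
  have K\<delta>: "K * \<delta> < 1" unfolding \<delta>_def using K by simp
  define b0 where "b0 = min 1 (min (\<delta> * h / (8 * c)) (h / (2 * \<eta>)))"
  have b0: "b0 > 0" unfolding b0_def using pos c \<delta>0 by simp
  show ?thesis
  proof (intro exI[of _ b0] conjI allI impI b0)
    fix \<beta> v assume \<beta>: "0 < \<beta>" and sol: "ode_sol \<sigma> \<eta> \<alpha> h r a \<beta> v" and mon: "mono_on {0<..} v"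
    show "b0 \<le> \<beta>"
    proof (rule ccontr)
      assume "\<not> b0 \<le> \<beta>"
      then have lt1: "\<beta> < 1" and lt2: "\<beta> < \<delta> * h / (8 * c)" and lt3: "\<beta> < h / (2 * \<eta>)"
        unfolding b0_def by auto
      define vs where "vs = \<delta> * \<beta>"
      have vs0: "vs > 0" unfolding vs_def using \<delta>0 \<beta> by simp
      have vsb: "vs \<le> \<beta>" unfolding vs_def using \<delta>1 \<beta> by (simp add: mult_left_le_one_le)
      have Kvs: "K * vs < \<beta>"
      proof -
        have "K * vs = (K * \<delta>) * \<beta>" unfolding vs_def by simp
        also have "\<dots> < 1 * \<beta>" using K\<delta> \<beta> by (intro mult_strict_right_mono) auto
        finally show ?thesis by simp
      qed
      have etavs: "\<eta> * vs < h / 2"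
      proof -
        have "\<eta> * vs \<le> \<eta> * \<beta>" using vsb pos by (intro mult_left_mono) auto
        also have "\<eta> * \<beta> < \<eta> * (h / (2 * \<eta>))" using lt3 pos by (intro mult_strict_left_mono) auto
        also have "\<eta> * (h / (2 * \<eta>)) = h / 2" using pos by simp
        finally show ?thesis .
      qed
      define T where "T = 4 * \<beta> / h"
      have T: "T > 0" unfolding T_def using \<beta> pos by simp
      have q: "\<And>w. 0 \<le> w \<Longrightarrow> w \<le> vs \<Longrightarrow> \<alpha> / 4 * w\<^sup>2 - a * w \<le> K * vs"
      proof -
        fix w :: real assume w: "0 \<le> w" "w \<le> vs"
        have w1: "w \<le> 1" using w vsb lt1 by linarith
        have "w\<^sup>2 \<le> w" using w w1 by (simp add: power2_eq_square mult_left_le_one_le)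
        then have "\<alpha> / 4 * w\<^sup>2 \<le> \<alpha> / 4 * w" using pos by simp
        then have "\<alpha> / 4 * w\<^sup>2 - a * w \<le> K * w" unfolding K_def by (simp add: algebra_simps)
        also have "K * w \<le> K * vs" using K w by (intro mult_left_mono) auto
        finally show "\<alpha> / 4 * w\<^sup>2 - a * w \<le> K * vs" .
      qed
      have key: "c * (2 * \<beta>) * T < vs"
      proof -
        have "c * (2 * \<beta>) * T = (8 * c * \<beta>) * \<beta> / h" unfolding T_def by simp
        also have "8 * c * \<beta> < \<delta> * h"
        proof -
          have "8 * c * \<beta> < 8 * c * (\<delta> * h / (8 * c))" using lt2 c by (intro mult_strict_left_mono) auto
          also have "\<dots> = \<delta> * h" using c by simp
          finally show ?thesis .
        qed
        then have "(8 * c * \<beta>) * \<beta> / h < (\<delta> * h) * \<beta> / h"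
          using \<beta> pos by (intro divide_strict_right_mono mult_strict_right_mono) auto
        also have "(\<delta> * h) * \<beta> / h = vs" unfolding vs_def using pos by simp
        finally show ?thesis .
      qed
      show False
      proof (rule barrier[OF pos sol mon, of vs T])
        show "vs > - r" using r vs0 by simp
        show "\<eta> * vs < h" using etavs pos by simp
        show "T > 0" by (rule T)
        fix \<xi> w assume \<xi>: "0 < \<xi>" "\<xi> \<le> T" and w: "- r \<le> w" "w \<le> vs"
        have w0: "0 \<le> w" using w r by simp
        have xi: "\<xi> * (h - \<eta> * w) \<ge> 0"
        proof -
          have "\<eta> * w \<le> \<eta> * vs" using w pos by (intro mult_left_mono) auto
          then have "h - \<eta> * w \<ge> 0" using etavs pos by linarith
          then show ?thesis using \<xi> by simp
        qed
        have inner: "(\<beta> + \<alpha> / 4 * w\<^sup>2 - a * w) - \<xi> * (h - \<eta> * w) \<le> 2 * \<beta>"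
          using q[OF w0 w(2)] xi Kvs by linarith
        have "Fv \<sigma> \<eta> \<alpha> h a \<beta> \<xi> w \<le> c * (2 * \<beta>)"
          unfolding Feq using inner c by (intro mult_left_mono) auto
        then have "Fv \<sigma> \<eta> \<alpha> h a \<beta> \<xi> w * T \<le> c * (2 * \<beta>) * T"
          using T by (intro mult_right_mono) auto
        then show "Fv \<sigma> \<eta> \<alpha> h a \<beta> \<xi> w * T < vs + r" using key r by linarith
      next
        have lhs: "\<beta> + \<alpha> / 4 * vs\<^sup>2 - a * vs < 2 * \<beta>" using q[of vs] vs0 Kvs by simp
        have "T * (\<eta> * vs) < T * (h / 2)" using T etavs by (intro mult_strict_left_mono) auto
        moreover have "T * (h / 2) = 2 * \<beta>" unfolding T_def using pos by simp
        moreover have "T * h = 4 * \<beta>" unfolding T_def using pos by simp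
        ultimately have "T * (h - \<eta> * vs) > 2 * \<beta>" by (simp add: right_diff_distrib)
        then show "\<beta> + \<alpha> / 4 * vs\<^sup>2 - a * vs < T * (h - \<eta> * vs)" using lhs by linarith
      qed
    qed
  qed
qed

theorem lemma21:
  fixes \<sigma> \<eta> \<alpha> h r a :: real
  assumes "\<sigma> > 0" "\<eta> > 0" "\<alpha> > 0" "h > 0" "r \<ge> 0"
  shows "(a > - \<alpha> / 4 * r \<longrightarrow> Inf (ereal ` I1 \<sigma> \<eta> \<alpha> h r a) > 0) \<and>
         (a \<le> - \<alpha> / 4 * r \<longrightarrow> Inf (ereal ` I2 \<sigma> \<eta> \<alpha> h r a) > 0)"
proof (intro conjI impI)
  assume ca: "a > - \<alpha> / 4 * r"
  have "\<exists>b0>0. \<forall>\<beta> v. 0 \<le> \<beta> \<longrightarrow> ode_sol \<sigma> \<eta> \<alpha> h r a \<beta> v \<longrightarrow> mono_on {0<..} v \<longrightarrow> b0 \<le> \<beta>"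
  proof (cases "r > 0")
    case True
    then show ?thesis using caseI[OF assms(1-4)] by blast
  next
    case False
    then have "r = 0" using assms(5) by simp
    then show ?thesis using caseII[OF assms(1-4)] ca by simp
  qed
  then obtain b0 where b0: "b0 > 0"
    "\<And>\<beta> v. 0 \<le> \<beta> \<Longrightarrow> ode_sol \<sigma> \<eta> \<alpha> h r a \<beta> v \<Longrightarrow> mono_on {0<..} v \<Longrightarrow> b0 \<le> \<beta>" by blast
  show "Inf (ereal ` I1 \<sigma> \<eta> \<alpha> h r a) > 0"
  proof (rule inf_pos[OF b0(1)])
    fix \<beta> assume "\<beta> \<in> I1 \<sigma> \<eta> \<alpha> h r a"
    then obtain v where "\<beta> \<ge> 0" "ode_sol \<sigma> \<eta> \<alpha> h r a \<beta> v" "mono_on {0<..} v"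
      unfolding I1_def by blast
    then show "b0 \<le> \<beta>" using b0(2) by blast
  qed
next
  assume ca: "a \<le> - \<alpha> / 4 * r"
  have "\<exists>b0>0. \<forall>\<beta> v. 0 < \<beta> \<longrightarrow> ode_sol \<sigma> \<eta> \<alpha> h r a \<beta> v \<longrightarrow> mono_on {0<..} v \<longrightarrow> b0 \<le> \<beta>"
  proof (cases "r > 0")
    case True
    then obtain b0 where b0: "b0 > 0" "\<forall>\<beta> v. 0 \<le> \<beta> \<longrightarrow> ode_sol \<sigma> \<eta> \<alpha> h r a \<beta> v \<longrightarrow> mono_on {0<..} v \<longrightarrow> b0 \<le> \<beta>"
      using caseI[OF assms(1-4)] by blast
    show ?thesis
    proof (intro exI[of _ b0] conjI allI impI b0(1))
      fix \<beta> v assume "0 < \<beta>" "ode_sol \<sigma> \<eta> \<alpha> h r a \<beta> v" "mono_on {0<..} v"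
      then show "b0 \<le> \<beta>" using b0(2) by auto
    qed
  next
    case False
    then have "r = 0" using assms(5) by simp
    moreover have "a \<le> 0" using ca calculation by simp
    ultimately show ?thesis using caseIII[OF assms(1-4)] by simp
  qed
  then obtain b0 where b0: "b0 > 0"
    "\<And>\<beta> v. 0 < \<beta> \<Longrightarrow> ode_sol \<sigma> \<eta> \<alpha> h r a \<beta> v \<Longrightarrow> mono_on {0<..} v \<Longrightarrow> b0 \<le> \<beta>" by blast
  have bl: "beta2_low \<alpha> r a \<ge> 0"
  proof -
    have "a * r \<le> (- \<alpha> / 4 * r) * r" using ca assms(5) by (rule mult_right_mono)
    moreover have "(- \<alpha> / 4 * r) * r = - (\<alpha> * r\<^sup>2 / 4)" by (simp add: power2_eq_square)
    ultimately have "a * r \<le> - (\<alpha> * r\<^sup>2 / 4)" by (rule ord_le_eq_trans)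
    moreover have "- a * r = - (a * r)" by simp
    ultimately show ?thesis unfolding beta2_low_def by linarith
  qed
  show "Inf (ereal ` I2 \<sigma> \<eta> \<alpha> h r a) > 0"
  proof (rule inf_pos[OF b0(1)])
    fix \<beta> assume "\<beta> \<in> I2 \<sigma> \<eta> \<alpha> h r a"
    then obtain v where "\<beta> > beta2_low \<alpha> r a" "ode_sol \<sigma> \<eta> \<alpha> h r a \<beta> v" "mono_on {0<..} v"
      unfolding I2_def by blast
    moreover have "\<beta> > 0" using calculation(1) bl by linarith
    ultimately show "b0 \<le> \<beta>" using b0(2) by blast
  qed
qed

end
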